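(* Let $H=\{\lambda\in B_{1/\sqrt2}(0):\ \mathrm{Re}(\lambda)>0,\ \mathrm{Im}(\lambda)>0\}\setminus B_{2/3}(1/3)$. For every $\lambda\in H$ there exist real numbers $a\ge1$ and $b\ge 1/2$ such that $$R_{a,b}\subset \lambda R_{a,b}\cup(\lambda R_{a,b}-1)\cup(\lambda R_{a,b}+1).$$
   Context: $B_r(z_0)$ is the open disc of radius $r$ centered at $z_0$. For $a,b>0$, $R_{a,b}\subset\mathbb C$ is the closed rectangle centered at the origin with vertices $\pm a\pm ib$. For a set $E$, $\lambda E+c=\{\lambda z+c: z\in E\}$. *)

theory Defs
  imports "HOL-Analysis.Analysis"
begin

definition rect :: "real \<Rightarrow> real \<Rightarrow> complex set" where
  "rect a b = {z. \<bar>Re z\<bar> \<le> a \<and> \<bar>Im z\<bar> \<le> b}"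

definition Hregion :: "complex set" where
  "Hregion = {l \<in> ball 0 (1 / sqrt 2). Re l > 0 \<and> Im l > 0} - ball (1/3) (2/3)"

end

theory Submission
  imports Defs
begin

lemma fin: fixes A B x y :: real assumes "x - 1 \<le> 2*A" "2*A - 2*x \<le> 1+x" "-3*y \<le> 2*B" "2*B < -y"
  shows "\<bar>A - x\<bar> \<le> (1+x)/2 \<and> \<bar>B+y\<bar> \<le> y/2"
  unfolding abs_le_iff using assms by argo

lemma core_pos:
  fixes x y u q r2 :: real
  assumes x: "x > 0" and y: "y > 0" and r: "r2 = x^2+y^2" and h1: "3*r2 \<ge> 1+2*x"
    and h2: "r2 < 1/2"
    and hu: "\<bar>u\<bar>*(2*r2) \<le> 1+x" and hv: "\<bar>q\<bar>*(2*r2) \<le> y"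
    and t: "q*x - u*y < -(y/2)"
  shows "\<bar>(u-1)*x+q*y\<bar> \<le> (1+x)/2 \<and> \<bar>q*x-(u-1)*y\<bar> \<le> y/2"
proof -
  have r2: "r2 > 0" using r x by (simp add: add_pos_nonneg)
  have id: "y*(u*x+q*y) = -x*(q*x-u*y) + r2*q" by (simp add: r power2_eq_square algebra_simps)
  have "x*(y/2) \<le> x*(-(q*x-u*y))" using t x by (intro mult_left_mono) auto
  hence "-x*(q*x-u*y) \<ge> x*(y/2)" by (simp add: algebra_simps)
  moreover have "\<bar>r2*q\<bar> \<le> y/2" using hv r2 by (simp add: abs_mult algebra_simps)
  hence "r2*q \<ge> -(y/2)" by linarith
  ultimately have "y*(u*x+q*y) \<ge> y*((x-1)/2)" using id by (simp add: algebra_simps)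
  hence lo: "u*x+q*y \<ge> (x-1)/2" using y by simp
  have A: "\<bar>u\<bar>*x*(2*r2) \<le> (1+x)*x" using mult_right_mono[OF hu, of x] x by (simp add: algebra_simps)
  have B: "\<bar>q\<bar>*y*(2*r2) \<le> y*y" using mult_right_mono[OF hv, of y] y by (simp add: algebra_simps)
  have ux: "u*x \<le> \<bar>u\<bar>*x" by (rule mult_right_mono) (use x in auto)
  have qy: "q*y \<le> \<bar>q\<bar>*y" by (rule mult_right_mono) (use y in auto)
  have "(u*x+q*y)*(2*r2) \<le> (\<bar>u\<bar>*x + \<bar>q\<bar>*y)*(2*r2)"
    by (rule mult_right_mono) (use ux qy r2 in auto)
  also have "\<dots> = \<bar>u\<bar>*x*(2*r2) + \<bar>q\<bar>*y*(2*r2)" by (simp add: algebra_simps)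
  finally have E: "(u*x+q*y)*(2*r2) \<le> (1+x)*x + y*y" using A B by linarith
  have F: "(1+x)*x + y*y - x*(2*r2) \<le> (1+x)/2*(2*r2)"
  proof -
    have "x*1 \<le> x*(3*r2)" by (rule mult_left_mono) (use x h1 in auto)
    moreover have "x*x+y*y = r2" using r by (simp add: power2_eq_square)
    moreover have "(1+x)*x = x + x*x" "(1+x)/2*(2*r2) = r2 + x*r2" "x*(3*r2) = 3*(x*r2)"
      "x*(2*r2) = 2*(x*r2)" by (simp_all add: algebra_simps)
    ultimately show ?thesis by linarith
  qed
  have "(u*x+q*y - x)*(2*r2) = (u*x+q*y)*(2*r2) - x*(2*r2)" by (simp add: algebra_simps)
  also have "\<dots> \<le> (1+x)/2*(2*r2)" using E F by linarith
  finally have "(u*x+q*y - x)*(2*r2) \<le> (1+x)/2*(2*r2)" .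
  hence up: "u*x+q*y - x \<le> (1+x)/2" using r2 by simp
  have C: "\<bar>q\<bar>*x*(2*r2) \<le> y*x" using mult_right_mono[OF hv, of x] x by (simp add: algebra_simps)
  have D: "\<bar>u\<bar>*y*(2*r2) \<le> (1+x)*y" using mult_right_mono[OF hu, of y] y by (simp add: algebra_simps)
  have qx: "-\<bar>q\<bar>*x \<le> q*x" by (rule mult_right_mono) (use x in auto)
  have uy: "u*y \<le> \<bar>u\<bar>*y" by (rule mult_right_mono) (use y in auto)
  have "(-\<bar>q\<bar>*x - \<bar>u\<bar>*y)*(2*r2) \<le> (q*x-u*y)*(2*r2)"
    by (rule mult_right_mono) (use qx uy r2 in auto)
  moreover have "(-\<bar>q\<bar>*x - \<bar>u\<bar>*y)*(2*r2) = -(\<bar>q\<bar>*x*(2*r2)) - \<bar>u\<bar>*y*(2*r2)"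
    by (simp add: algebra_simps)
  ultimately have G: "(q*x-u*y)*(2*r2) \<ge> -(y*x + (1+x)*y)" using C D by linarith
  have H: "y*(1+2*x) \<le> y*(3*r2)" by (rule mult_left_mono) (use h1 y in auto)
  have "(-3*y/2)*(2*r2) = -(y*(3*r2))" by (simp add: algebra_simps)
  also have "\<dots> \<le> -(y*x + (1+x)*y)" using H by (simp add: algebra_simps)
  also have "\<dots> \<le> (q*x-u*y)*(2*r2)" using G by simp
  finally have "(-3*y/2)*(2*r2) \<le> (q*x-u*y)*(2*r2)" .
  hence lo2: "q*x-u*y \<ge> -3*y/2" by (rule mult_right_le_imp_le) (use r2 in auto)
  have e1: "(u-1)*x+q*y = u*x+q*y - x" and e2: "q*x-(u-1)*y = q*x-u*y + y" by (simp_all add: algebra_simps)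
  have "x - 1 \<le> 2*(u*x+q*y)" using lo by simp
  moreover have "2*(u*x+q*y) - 2*x \<le> 1+x" using up by simp
  moreover have "-3*y \<le> 2*(q*x-u*y)" using lo2 by simp
  moreover have "2*(q*x-u*y) < -y" using t by simp
  ultimately show ?thesis unfolding e1 e2 by (rule fin)
qed

lemma core:
  fixes x y u q r2 :: real
  assumes x: "x > 0" and y: "y > 0" and r: "r2 = x^2+y^2" and h1: "3*r2 \<ge> 1+2*x"
    and h2: "r2 < 1/2"
    and hu: "\<bar>u\<bar>*(2*r2) \<le> 1+x" and hv: "\<bar>q\<bar>*(2*r2) \<le> y"
  shows "\<exists>c\<in>{-1,0,1::real}. \<bar>(u-c)*x+q*y\<bar> \<le> (1+x)/2 \<and> \<bar>q*x-(u-c)*y\<bar> \<le> y/2"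
proof -
  have r2: "r2 > 0" using r x by (simp add: add_pos_nonneg)
  consider "q*x - u*y < -(y/2)" | "q*x - u*y > y/2" | "\<bar>q*x - u*y\<bar> \<le> y/2" by linarith
  thus ?thesis
  proof cases
    case 1
    from core_pos[OF x y r h1 h2 hu hv this] show ?thesis by auto
  next
    case 2
    have "(-q)*x - (-u)*y < -(y/2)" using 2 by simp
    from core_pos[OF x y r h1 h2 _ _ this] hu hv
    have "\<bar>(-u-1)*x+(-q)*y\<bar> \<le> (1+x)/2 \<and> \<bar>(-q)*x-(-u-1)*y\<bar> \<le> y/2" by simp
    hence "\<bar>(u-(-1))*x+q*y\<bar> \<le> (1+x)/2 \<and> \<bar>q*x-(u-(-1))*y\<bar> \<le> y/2"
    proof -
      have e1: "(u-(-1))*x+q*y = -((-u-1)*x+(-q)*y)" by (simp add: algebra_simps)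
      have e2: "q*x-(u-(-1))*y = -((-q)*x-(-u-1)*y)" by (simp add: algebra_simps)
      show ?thesis unfolding e1 e2 abs_minus_cancel by fact
    qed
    thus ?thesis by blast
  next
    case 3
    have id: "y*(u*x+q*y) = -x*(q*x-u*y) + r2*q" by (simp add: r power2_eq_square algebra_simps)
    have "\<bar>-x*(q*x-u*y)\<bar> \<le> x*(y/2)" using 3 x by (simp add: abs_mult mult_left_mono)
    moreover have "\<bar>r2*q\<bar> \<le> y/2" using hv r2 by (simp add: abs_mult algebra_simps)
    moreover have "\<bar>y*(u*x+q*y)\<bar> \<le> \<bar>-x*(q*x-u*y)\<bar> + \<bar>r2*q\<bar>" unfolding id by (rule abs_triangle_ineq)
    ultimately have "\<bar>y*(u*x+q*y)\<bar> \<le> y*((1+x)/2)" by (simp add: algebra_simps)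
    hence "\<bar>u*x+q*y\<bar> \<le> (1+x)/2" using y by (simp add: abs_mult)
    thus ?thesis using 3 by force
  qed
qed


theorem mainTheorem4:
  fixes l :: complex
  assumes "l \<in> Hregion"
  shows "\<exists>a b :: real. a \<ge> 1 \<and> b \<ge> 1/2 \<and>
           rect a b \<subseteq> ((\<lambda>z. l * z) ` rect a b) \<union> ((\<lambda>z. l * z - 1) ` rect a b)
                         \<union> ((\<lambda>z. l * z + 1) ` rect a b)"
proof -
  define x where "x = Re l"
  define y where "y = Im l"
  define r2 where "r2 = x^2+y^2"
  have x: "x > 0" and y: "y > 0" and nl: "cmod l < 1 / sqrt 2" and far: "\<not> dist (1/3) l < 2/3"
    using assms unfolding Hregion_def x_def y_def by auto
  have r2: "r2 > 0" using x y unfolding r2_def by (simp add: add_pos_pos)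
  have cm: "cmod l = sqrt r2" unfolding r2_def x_def y_def by (simp add: cmod_def)
  have "sqrt r2 < sqrt (1/2)" using nl cm by (simp add: real_sqrt_divide)
  hence h2: "r2 < 1/2" by simp
  have "dist (1/3) l = sqrt ((1/3 - x)^2 + y^2)"
    unfolding dist_complex_def cmod_def x_def y_def by simp
  hence "sqrt (4/9) \<le> sqrt ((1/3 - x)^2 + y^2)" using far by (simp add: real_sqrt_divide)
  hence "4/9 \<le> (1/3 - x)^2 + y^2" by (simp only: real_sqrt_le_iff)
  hence h1: "3*r2 \<ge> 1+2*x" unfolding r2_def by (simp add: power2_eq_square algebra_simps)
  have rr: "r2 = x^2+y^2" by (simp add: r2_def)
  define a where "a = (1+x)/(2*r2)"
  define b where "b = y/(2*r2)"
  have a1: "a \<ge> 1" unfolding a_def using r2 h2 x by (simp add: pos_le_divide_eq)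
  have xs: "x < 1/4" using h1 h2 by linarith
  have ylo: "y^2 \<ge> 1/3"
  proof -
    have "x*x \<le> x*(2/3)" by (rule mult_left_mono) (use xs x in auto)
    thus ?thesis using h1 unfolding r2_def by (simp add: power2_eq_square)
  qed
  have yhi: "y^2 < 1/2" using h2 unfolding r2_def by (smt (verit) zero_le_power2)
  have y1: "y > 29/100"
  proof (rule ccontr)
    assume "\<not> y > 29/100"
    hence "y*y \<le> (29/100)*(29/100)" using y by (intro mult_mono) auto
    thus False using ylo by (simp add: power2_eq_square)
  qed
  have y2: "y < 71/100"
  proof (rule ccontr)
    assume "\<not> y < 71/100"
    hence "(71/100)*(71/100) \<le> y*y" by (intro mult_mono) auto
    thus False using yhi by (simp add: power2_eq_square)
  qed
  have "(y - 29/100)*(71/100 - y) \<ge> 0" using y1 y2 by simp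
  moreover have "x*x \<le> (1/4)*(1/4)" using x xs by (intro mult_mono) auto
  moreover have "(y - 29/100)*(71/100 - y) = y - y*y - 2059/10000" by algebra
  ultimately have "r2 \<le> y" unfolding r2_def power2_eq_square by linarith
  hence b1: "b \<ge> 1/2" unfolding b_def using r2 by (simp add: pos_le_divide_eq)
  have l0: "l \<noteq> 0" using x x_def by auto
  have "rect a b \<subseteq> ((\<lambda>z. l * z) ` rect a b) \<union> ((\<lambda>z. l * z - 1) ` rect a b)
                         \<union> ((\<lambda>z. l * z + 1) ` rect a b)"
  proof
    fix z assume z: "z \<in> rect a b"
    define u where "u = Re z"
    define q where "q = Im z"
    have hu: "\<bar>u\<bar>*(2*r2) \<le> 1+x" using z r2 unfolding rect_def u_def a_def
      by (simp add: pos_le_divide_eq)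
    have hv: "\<bar>q\<bar>*(2*r2) \<le> y" using z r2 unfolding rect_def q_def b_def
      by (simp add: pos_le_divide_eq)
    obtain c where c: "c \<in> {-1,0,1::real}" and c1: "\<bar>(u-c)*x+q*y\<bar> \<le> (1+x)/2"
      and c2: "\<bar>q*x-(u-c)*y\<bar> \<le> y/2"
      using core[OF x y rr h1 h2 hu hv] by blast
    define w where "w = (z - of_real c)/l"
    have zw: "z = l*w + of_real c" unfolding w_def using l0 by simp
    have lr: "(Re l)\<^sup>2 + (Im l)\<^sup>2 = r2" unfolding r2_def x_def y_def by simp
    have rew: "Re w = ((u-c)*x+q*y)/r2" "Im w = (q*x-(u-c)*y)/r2"
      unfolding w_def Re_divide Im_divide lr by (simp_all add: u_def q_def x_def y_def algebra_simps)
    have "\<bar>Re w\<bar> \<le> a" unfolding rew a_def using c1 r2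
      by (simp add: abs_divide divide_le_cancel field_simps)
    moreover have "\<bar>Im w\<bar> \<le> b" unfolding rew b_def using c2 r2
      by (simp add: abs_divide field_simps)
    ultimately have wr: "w \<in> rect a b" unfolding rect_def by simp
    from c consider "c = -1" | "c = 0" | "c = 1" by blast
    thus "z \<in> ((\<lambda>z. l * z) ` rect a b) \<union> ((\<lambda>z. l * z - 1) ` rect a b)
                         \<union> ((\<lambda>z. l * z + 1) ` rect a b)"
      by cases (use zw wr in auto)
  qed
  thus ?thesis using a1 b1 by blast
qed

end
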